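(* Let $\mathsf{K}$ be a commutative idempotent semiring, $N\ge1$, $\mathsf{A}\in\mathsf{K}^{N\times N}$, $\mathsf{b}\in\mathsf{K}^{N\times1}$, $\mathsf{c}\in\mathsf{K}^{1\times N}$, and $\mathsf{S}_N=\mathsf{c}(\mathsf{A}X)^*\mathsf{b}\in\mathsf{K}[[X]]$. Then $$\mathsf{S}_N=\bigoplus_{\pi\in\mathscr{P}_N}w(\pi)\Big(\bigoplus_{C\in\mathscr{A}(\pi)}\ \bigotimes_{\gamma\in C}w(\gamma)^+\Big),$$ where the term corresponding to $C=\emptyset$ is $\mathbb{1}$ (and $\emptyset\in\mathscr{A}(\pi)$ for every $\pi$).
   Context: $(\mathsf{A}X)^*=\bigoplus_{k\ge0}\mathsf{A}^kX^k$, so $\mathsf{S}_N=\bigoplus_k \mathsf{c}\mathsf{A}^k\mathsf{b}\,X^k$. For a series $U$ with zero constant coefficient, $U^*=\bigoplus_{k\ge0}U^k$ and $U^+=UU^*$. The digraph $G_N$ has nodes $1,\dots,N$, an input node $in$ and an output node $out$; arcs $j\to i$ with weight $\mathsf{A}_{ij}X$ for $1\le i,j\le N$, arcs $in\to i$ with weight $\mathsf{b}_i$, and arcs $i\to out$ with weight $\mathsf{c}_i$. The weight $w(\pi)$ of a path is the product of the weights of its arcs. A path is elementary if it has no repeated node; an elementary circuit is a closed path with no repeated node other than its common start and end. Two circuits are cyclic conjugates if one is obtained from the other by a circular permutation; by commutativity conjugates have equal weight, so $w(\gamma)$ is defined for a conjugacy class $\gamma$. $\mathscr{C}_N$ is the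 set of conjugacy classes of elementary circuits of $G_N$; $\mathscr{P}_N$ is the set of elementary paths from $in$ to $out$. For a path $\pi$, a set $C\subseteq\mathscr{C}_N$ is accessible from $\pi$ if the union of the circuits of $C$ and of the path $\pi$ is a connected subgraph in the undirected sense; $\mathscr{A}(\pi)$ is the set of subsets $C\subseteq\mathscr{C}_N$ accessible from $\pi$. *)

theory Defs
  imports "HOL-Computational_Algebra.Formal_Power_Series"
begin

class idem_comm_semiring_1 = comm_semiring_1 +
  assumes add_idem: "x + x = x"

text \<open>Kleene star and plus of a power series (meant for zero constant coefficient):
  U* = sum over k of U^k, computed coefficientwise (coefficient n only gets
  contributions from k <= n when U has zero constant term).\<close>
definition fps_kstar :: "'a::comm_semiring_1 fps \<Rightarrow> 'a fps" where
  "fps_kstar U = Abs_fps (\<lambda>n. \<Sum>k\<le>n. fps_nth (U ^ k) n)"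

definition fps_kplus :: "'a::comm_semiring_1 fps \<Rightarrow> 'a fps" where
  "fps_kplus U = U * fps_kstar U"

text \<open>Matrices indexed by 1..N, as functions.\<close>
fun matpow :: "nat \<Rightarrow> (nat \<Rightarrow> nat \<Rightarrow> 'a::comm_semiring_1) \<Rightarrow> nat \<Rightarrow> nat \<Rightarrow> nat \<Rightarrow> 'a" where
  "matpow N A 0 = (\<lambda>i j. if i = j then 1 else 0)"
| "matpow N A (Suc k) = (\<lambda>i j. \<Sum>l\<in>{1..N}. A i l * matpow N A k l j)"

text \<open>S_N = c (A X)^* b = sum_k (c A^k b) X^k.\<close>
definition S_series :: "nat \<Rightarrow> (nat \<Rightarrow> nat \<Rightarrow> 'a::comm_semiring_1) \<Rightarrow> (nat \<Rightarrow> 'a) \<Rightarrow> (nat \<Rightarrow> 'a) \<Rightarrow> 'a fps" where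
  "S_series N A b c = Abs_fps (\<lambda>k. \<Sum>i\<in>{1..N}. \<Sum>j\<in>{1..N}. c i * matpow N A k i j * b j)"

datatype node = In | Out | Nd nat

fun is_arc :: "nat \<Rightarrow> node \<times> node \<Rightarrow> bool" where
  "is_arc N (In, Nd i) = (i \<in> {1..N})"
| "is_arc N (Nd j, Nd i) = (i \<in> {1..N} \<and> j \<in> {1..N})"
| "is_arc N (Nd i, Out) = (i \<in> {1..N})"
| "is_arc N _ = False"

fun arc_weight :: "(nat \<Rightarrow> nat \<Rightarrow> 'a::comm_semiring_1) \<Rightarrow> (nat \<Rightarrow> 'a) \<Rightarrow> (nat \<Rightarrow> 'a) \<Rightarrow> node \<times> node \<Rightarrow> 'a fps" where
  "arc_weight A b c (In, Nd i) = fps_const (b i)"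
| "arc_weight A b c (Nd j, Nd i) = fps_const (A i j) * fps_X"
| "arc_weight A b c (Nd i, Out) = fps_const (c i)"
| "arc_weight A b c _ = 0"

definition path_arcs :: "node list \<Rightarrow> (node \<times> node) list" where
  "path_arcs xs = zip xs (tl xs)"

definition circ_arcs :: "node list \<Rightarrow> (node \<times> node) list" where
  "circ_arcs xs = zip xs (rotate1 xs)"

definition weight :: "(nat \<Rightarrow> nat \<Rightarrow> 'a::comm_semiring_1) \<Rightarrow> (nat \<Rightarrow> 'a) \<Rightarrow> (nat \<Rightarrow> 'a) \<Rightarrow> (node \<times> node) list \<Rightarrow> 'a fps" where
  "weight A b c es = prod_list (map (arc_weight A b c) es)"

definition elem_paths :: "nat \<Rightarrow> node list set" where
  "elem_paths N = {xs. xs \<noteq> [] \<and> hd xs = In \<and> last xs = Out \<and> distinct xs \<and>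
                       (\<forall>e\<in>set (path_arcs xs). is_arc N e)}"

definition elem_circuit :: "nat \<Rightarrow> node list \<Rightarrow> bool" where
  "elem_circuit N xs \<longleftrightarrow> xs \<noteq> [] \<and> distinct xs \<and> (\<forall>e\<in>set (circ_arcs xs). is_arc N e)"

definition circ_class :: "node list \<Rightarrow> node list set" where
  "circ_class xs = range (\<lambda>k. rotate k xs)"

definition elem_circuit_classes :: "nat \<Rightarrow> node list set set" where
  "elem_circuit_classes N = circ_class ` {xs. elem_circuit N xs}"

definition class_weight :: "(nat \<Rightarrow> nat \<Rightarrow> 'a::comm_semiring_1) \<Rightarrow> (nat \<Rightarrow> 'a) \<Rightarrow> (nat \<Rightarrow> 'a) \<Rightarrow> node list set \<Rightarrow> 'a fps" where
  "class_weight A b c \<gamma> = weight A b c (circ_arcs (SOME xs. xs \<in> \<gamma>))"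

definition accessible :: "node list \<Rightarrow> node list set set \<Rightarrow> bool" where
  "accessible p C \<longleftrightarrow>
     (let V = set p \<union> (\<Union>\<gamma>\<in>C. \<Union>xs\<in>\<gamma>. set xs);
          E = set (path_arcs p) \<union> (\<Union>\<gamma>\<in>C. \<Union>xs\<in>\<gamma>. set (circ_arcs xs))
      in \<forall>u\<in>V. \<forall>v\<in>V. (u, v) \<in> (E \<union> E\<inverse>)\<^sup>*)"

definition accessible_sets :: "nat \<Rightarrow> node list \<Rightarrow> node list set set set" where
  "accessible_sets N p = {C. C \<subseteq> elem_circuit_classes N \<and> accessible p C}"

end

theory Submission imports Defs "HOL-Library.FuncSet" begin

section \<open>Idempotent order\<close>

definition ile :: "'a::idem_comm_semiring_1 \<Rightarrow> 'a \<Rightarrow> bool" where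
  "ile x y \<longleftrightarrow> x + y = y"

lemma ile_refl: "ile (x::'a::idem_comm_semiring_1) x"
  by (simp add: ile_def add_idem)

lemma ile_trans: "ile (x::'a::idem_comm_semiring_1) y \<Longrightarrow> ile y z \<Longrightarrow> ile x z"
  unfolding ile_def by (metis add.assoc)

lemma ile_antisym: "ile (x::'a::idem_comm_semiring_1) y \<Longrightarrow> ile y x \<Longrightarrow> x = y"
  unfolding ile_def by (metis add.commute)

lemma ile_zero: "ile 0 (x::'a::idem_comm_semiring_1)"
  by (simp add: ile_def)

lemma ile_mult_right: "ile (x::'a::idem_comm_semiring_1) y \<Longrightarrow> ile (x * z) (y * z)"
  unfolding ile_def by (metis distrib_right)

lemma ile_mult_left: "ile (x::'a::idem_comm_semiring_1) y \<Longrightarrow> ile (z * x) (z * y)"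
  unfolding ile_def by (metis distrib_left)

lemma ile_sum_member:
  assumes "finite S" "x \<in> S"
  shows "ile (f x) (sum f S :: 'a::idem_comm_semiring_1)"
proof -
  have "sum f S = f x + sum f (S - {x})" using assms by (simp add: sum.remove)
  then show ?thesis unfolding ile_def by (metis add.assoc add_idem)
qed

lemma ile_sum_bound:
  assumes "finite S" "\<And>x. x \<in> S \<Longrightarrow> ile (f x) (s::'a::idem_comm_semiring_1)"
  shows "ile (sum f S) s"
  using assms
proof (induction S rule: finite_induct)
  case empty then show ?case by (simp add: ile_zero)
next
  case (insert x F)
  then have "ile (f x) s" "ile (sum f F) s" by auto
  then show ?case using insert(1,2) unfolding ile_def by (simp add: add.assoc)
qed

lemma path_arcs_simps[simp]:
  "path_arcs [] = []" "path_arcs [x] = []" "path_arcs (x # y # zs) = (x, y) # path_arcs (y # zs)"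
  by (simp_all add: path_arcs_def)

lemma path_arcs_append:
  "path_arcs (xs @ y # ys) = path_arcs (xs @ [y]) @ path_arcs (y # ys)"
proof (induction xs)
  case Nil then show ?case by simp
next
  case (Cons x xs) then show ?case by (cases xs) auto
qed

lemma path_arcs_snoc:
  "xs \<noteq> [] \<Longrightarrow> path_arcs (xs @ [y]) = path_arcs xs @ [(last xs, y)]"
proof (induction xs)
  case Nil then show ?case by simp
next
  case (Cons x xs) then show ?case by (cases xs) auto
qed

lemma length_path_arcs: "length (path_arcs xs) = length xs - 1"
  by (simp add: path_arcs_def)

lemma circ_arcs_path: "circ_arcs (x # xs) = path_arcs (x # xs @ [x])"
proof -
  have "zip ((x # xs) @ [x]) (xs @ [x]) = zip (x # xs) (xs @ [x])"
    by (simp only: zip_append1) simp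
  then show ?thesis by (simp add: circ_arcs_def path_arcs_def)
qed

lemma length_circ_arcs: "length (circ_arcs xs) = length xs"
  by (simp add: circ_arcs_def)

lemma path_arcs_in_set: "e \<in> set (path_arcs xs) \<Longrightarrow> fst e \<in> set xs \<and> snd e \<in> set xs"
  unfolding path_arcs_def
  by (cases xs; cases e) (auto dest: set_zip_leftD set_zip_rightD)

lemma circ_arcs_in_set: "e \<in> set (circ_arcs xs) \<Longrightarrow> fst e \<in> set xs \<and> snd e \<in> set xs"
  unfolding circ_arcs_def
  by (cases e) (auto dest: set_zip_leftD set_zip_rightD)

lemma mset_circ_arcs_rotate1: "mset (circ_arcs (rotate1 xs)) = mset (circ_arcs xs)"
proof (cases xs)
  case Nil then show ?thesis by simp
next
  case (Cons x ys)
  show ?thesis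
  proof (cases ys)
    case Nil with Cons show ?thesis by simp
  next
    case (Cons y zs)
    have "circ_arcs (rotate1 xs) = path_arcs (y # zs @ [x, y])"
      using \<open>xs = x # ys\<close> Cons by (simp add: circ_arcs_path)
    also have "\<dots> = path_arcs ((y # zs) @ [x]) @ [(x, y)]"
      using path_arcs_snoc[of "(y # zs) @ [x]" y] by simp
    finally have 1: "circ_arcs (rotate1 xs) = path_arcs ((y # zs) @ [x]) @ [(x, y)]" .
    have 2: "circ_arcs xs = (x, y) # path_arcs ((y # zs) @ [x])"
      using \<open>xs = x # ys\<close> Cons by (simp add: circ_arcs_path)
    show ?thesis using 1 2 by simp
  qed
qed

lemma mset_circ_arcs_rotate: "mset (circ_arcs (rotate k xs)) = mset (circ_arcs xs)"
  by (induction k) (simp_all add: mset_circ_arcs_rotate1)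

lemma reach_from_hd:
  "u \<in> set xs \<Longrightarrow> (hd xs, u) \<in> (set (path_arcs xs))\<^sup>*"
proof (induction xs)
  case Nil then show ?case by simp
next
  case (Cons x xs)
  show ?case
  proof (cases "u = x")
    case True then show ?thesis by simp
  next
    case False
    then have u: "u \<in> set xs" using Cons.prems by simp
    then obtain y zs where xs: "xs = y # zs" by (cases xs) auto
    have "(y, u) \<in> (set (path_arcs xs))\<^sup>*" using Cons.IH u xs by simp
    moreover have "set (path_arcs xs) \<subseteq> set (path_arcs (x # xs))" using xs by auto
    ultimately have "(y, u) \<in> (set (path_arcs (x # xs)))\<^sup>*" using rtrancl_mono by blast
    moreover have "(x, y) \<in> set (path_arcs (x # xs))" using xs by simp
    ultimately show ?thesis by (simp add: converse_rtrancl_into_rtrancl)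
  qed
qed

section \<open>Walks\<close>

definition walk :: "nat \<Rightarrow> node list \<Rightarrow> bool" where
  "walk N xs \<longleftrightarrow> xs \<noteq> [] \<and> hd xs = In \<and> last xs = Out \<and> (\<forall>e\<in>set (path_arcs xs). is_arc N e)"

lemma split_nondistinct:
  "\<not> distinct xs \<Longrightarrow> \<exists>us v ws zs. xs = us @ v # ws @ v # zs \<and> distinct (v # ws)"
proof (induction xs)
  case Nil then show ?case by simp
next
  case (Cons x xs)
  show ?case
  proof (cases "distinct xs")
    case True
    with Cons.prems have "x \<in> set xs" by simp
    then obtain ws zs where xs: "xs = ws @ x # zs" "x \<notin> set ws" using split_list_first by metis
    with True have "distinct (x # ws)" by simp
    with xs show ?thesis by (metis append_Nil)
  next
    case False
    then obtain us v ws zs where "xs = us @ v # ws @ v # zs \<and> distinct (v # ws)" using Cons.IH by blast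
    then show ?thesis by (metis append_Cons)
  qed
qed

lemma decomp:
  "walk N xs \<Longrightarrow> \<exists>p M. p \<in> elem_paths N \<and> (\<forall>\<delta>\<in>#M. elem_circuit N \<delta>) \<and>
     mset (path_arcs xs) = mset (path_arcs p) + (\<Sum>\<delta>\<in>#M. mset (circ_arcs \<delta>)) \<and>
     set xs = set p \<union> (\<Union>\<delta>\<in>set_mset M. set \<delta>)"
proof (induction "length xs" arbitrary: xs rule: less_induct)
  case less
  show ?case
  proof (cases "distinct xs")
    case True
    then have "xs \<in> elem_paths N" using less.prems by (simp add: walk_def elem_paths_def)
    then show ?thesis by (intro exI[of _ xs] exI[of _ "{#}"]) simp
  next
    case False
    then obtain us v ws zs where xs: "xs = us @ v # ws @ v # zs" and dvw: "distinct (v # ws)"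
      using split_nondistinct by blast
    define xs' where "xs' = us @ v # zs"
    have pa: "path_arcs xs = path_arcs (us @ [v]) @ circ_arcs (v # ws) @ path_arcs (v # zs)"
    proof -
      have "path_arcs xs = path_arcs (us @ [v]) @ path_arcs ((v # ws) @ v # zs)"
        unfolding xs using path_arcs_append[of us v "ws @ v # zs"] by simp
      also have "path_arcs ((v # ws) @ v # zs) = path_arcs ((v # ws) @ [v]) @ path_arcs (v # zs)"
        by (rule path_arcs_append)
      finally show ?thesis by (simp add: circ_arcs_path)
    qed
    have pa': "path_arcs xs' = path_arcs (us @ [v]) @ path_arcs (v # zs)"
      unfolding xs'_def by (rule path_arcs_append)
    have w: "xs \<noteq> []" "hd xs = In" "last xs = Out" "\<forall>e\<in>set (path_arcs xs). is_arc N e"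
      using less.prems by (auto simp: walk_def)
    have "hd xs' = In"
      using w(2) unfolding xs xs'_def by (cases us) auto
    moreover have "last xs' = Out"
      using w(3) unfolding xs xs'_def by (cases zs) auto
    moreover have "\<forall>e\<in>set (path_arcs xs'). is_arc N e"
      using w(4) pa pa' by auto
    ultimately have wk: "walk N xs'" unfolding walk_def xs'_def by simp
    have len: "length xs' < length xs" unfolding xs xs'_def by simp
    obtain p M where pM: "p \<in> elem_paths N" "\<forall>\<delta>\<in>#M. elem_circuit N \<delta>"
      "mset (path_arcs xs') = mset (path_arcs p) + (\<Sum>\<delta>\<in>#M. mset (circ_arcs \<delta>))"
      "set xs' = set p \<union> (\<Union>\<delta>\<in>set_mset M. set \<delta>)"
      using less.hyps[OF len wk] by blast
    have ec: "elem_circuit N (v # ws)"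
      using dvw w(4) pa unfolding elem_circuit_def by auto
    have m: "mset (path_arcs xs) = mset (path_arcs xs') + mset (circ_arcs (v # ws))"
      using pa pa' by simp
    have st: "set xs = set xs' \<union> set (v # ws)" unfolding xs xs'_def by auto
    show ?thesis
      apply (intro exI[of _ p] exI[of _ "add_mset (v # ws) M"])
      using pM ec m st by (auto simp: add_ac)
  qed
qed

lemma tail_form:
  "\<And>j. zs \<noteq> [] \<Longrightarrow> last zs = Out \<Longrightarrow> (\<forall>e\<in>set (path_arcs (Nd j # zs)). is_arc N e) \<Longrightarrow>
     \<exists>ys. set ys \<subseteq> {1..N} \<and> zs = map Nd ys @ [Out]"
proof (induction zs)
  case Nil then show ?case by simp
next
  case (Cons z zs)
  have arc: "is_arc N (Nd j, z)" using Cons.prems(3) by simp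
  show ?case
  proof (cases z)
    case In then show ?thesis using arc by simp
  next
    case Out
    have "zs = []"
    proof (rule ccontr)
      assume "zs \<noteq> []"
      then obtain y ys where "zs = y # ys" by (cases zs) auto
      then have "is_arc N (Out, y)" using Cons.prems(3) Out by simp
      then show False by (cases y) auto
    qed
    then show ?thesis using Out by (intro exI[of _ "[]"]) simp
  next
    case (Nd i)
    have i: "i \<in> {1..N}" using arc Nd by simp
    have zs: "zs \<noteq> []" using Cons.prems(2) Nd by auto
    have "\<forall>e\<in>set (path_arcs (Nd i # zs)). is_arc N e"
      using Cons.prems(3) Nd zs by (cases zs) auto
    then obtain ys where "set ys \<subseteq> {1..N}" "zs = map Nd ys @ [Out]"
      using Cons.IH[OF zs] Cons.prems(2) zs by auto
    then show ?thesis using Nd i by (intro exI[of _ "i # ys"]) simp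
  qed
qed

lemma walk_form:
  assumes "walk N xs"
  shows "\<exists>ys. ys \<noteq> [] \<and> set ys \<subseteq> {1..N} \<and> xs = In # map Nd ys @ [Out]"
proof -
  obtain zs where xs: "xs = In # zs" using assms unfolding walk_def by (cases xs) auto
  have "zs \<noteq> []" using assms xs unfolding walk_def by auto
  then obtain z zs' where zs: "zs = z # zs'" by (cases zs) auto
  have arc: "is_arc N (In, z)" using assms xs zs unfolding walk_def by auto
  then obtain j where z: "z = Nd j" "j \<in> {1..N}" by (cases z) auto
  have "zs' \<noteq> []" using assms xs zs z unfolding walk_def by auto
  moreover have "last zs' = Out" using assms xs zs z \<open>zs' \<noteq> []\<close> unfolding walk_def by auto
  moreover have "\<forall>e\<in>set (path_arcs (Nd j # zs')). is_arc N e"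
    using assms xs zs z unfolding walk_def by auto
  ultimately obtain ys where "set ys \<subseteq> {1..N}" "zs' = map Nd ys @ [Out]"
    using tail_form by blast
  then show ?thesis using xs zs z by (intro exI[of _ "j # ys"]) auto
qed

lemma walk_of:
  assumes "ys \<noteq> []" "set ys \<subseteq> {1..N}"
  shows "walk N (In # map Nd ys @ [Out])"
proof -
  have "\<forall>e\<in>set (path_arcs (map Nd ys @ [Out])). is_arc N e"
    using assms
  proof (induction ys)
    case Nil then show ?case by simp
  next
    case (Cons y ys)
    then show ?case by (cases ys) auto
  qed
  then show ?thesis using assms unfolding walk_def by (cases ys) auto
qed

definition wm :: "(nat \<Rightarrow> nat \<Rightarrow> 'a::comm_semiring_1) \<Rightarrow> (nat \<Rightarrow> 'a) \<Rightarrow> (nat \<Rightarrow> 'a) \<Rightarrow> (node \<times> node) multiset \<Rightarrow> 'a fps" where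
  "wm A b c M = prod_mset (image_mset (arc_weight A b c) M)"

lemma weight_wm: "weight A b c es = wm A b c (mset es)"
  unfolding weight_def wm_def by (simp add: prod_mset_prod_list flip: mset_map)

lemma wm_plus: "wm A b c (M + M') = wm A b c M * wm A b c M'"
  unfolding wm_def by simp

lemma wm_empty: "wm A b c {#} = 1"
  unfolding wm_def by simp

lemma wm_repeat: "wm A b c (repeat_mset k M) = wm A b c M ^ k"
proof (induction k)
  case 0 then show ?case by (simp add: wm_empty)
next
  case (Suc k)
  have "repeat_mset (Suc k) M = M + repeat_mset k M" by simp
  then show ?case using Suc by (simp only: wm_plus power_Suc)
qed

lemma wm_sum_mset: "wm A b c (\<Sum>x\<in>#M. f x) = (\<Prod>x\<in>#M. wm A b c (f x))"
proof (induction M)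
  case empty then show ?case by (simp add: wm_empty)
next
  case (add x M)
  have "(\<Sum>x\<in>#add_mset x M. f x) = f x + (\<Sum>x\<in>#M. f x)" by simp
  then show ?case using add by (simp only: wm_plus) simp
qed

lemma wm_sum: "finite S \<Longrightarrow> wm A b c (\<Sum>x\<in>S. f x) = (\<Prod>x\<in>S. wm A b c (f x))"
proof (induction S rule: finite_induct)
  case empty then show ?case by (simp add: wm_empty)
next
  case (insert x F)
  then show ?case by (simp add: wm_plus)
qed

fun prodA :: "(nat \<Rightarrow> nat \<Rightarrow> 'a::comm_semiring_1) \<Rightarrow> nat list \<Rightarrow> 'a" where
  "prodA A [] = 1"
| "prodA A [y] = 1"
| "prodA A (y # z # zs) = A z y * prodA A (z # zs)"

lemma prodA_snoc: "ys \<noteq> [] \<Longrightarrow> prodA A (ys @ [i]) = prodA A ys * A i (last ys)"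
proof (induction ys)
  case Nil then show ?case by simp
next
  case (Cons y ys)
  then show ?case by (cases ys) (auto simp: mult_ac)
qed

lemma weight_inner:
  "ys \<noteq> [] \<Longrightarrow> weight A b c (path_arcs (map Nd ys)) = fps_const (prodA A ys) * fps_X ^ (length ys - 1)"
proof (induction ys)
  case Nil then show ?case by simp
next
  case (Cons y ys)
  show ?case
  proof (cases ys)
    case Nil then show ?thesis by (simp add: weight_def)
  next
    case (Cons z zs)
    have "weight A b c (path_arcs (map Nd (y # ys))) =
          arc_weight A b c (Nd y, Nd z) * weight A b c (path_arcs (map Nd ys))"
      using Cons by (simp add: weight_def)
    also have "\<dots> = fps_const (A z y) * fps_X * (fps_const (prodA A ys) * fps_X ^ (length ys - 1))"
      using Cons.IH Cons by simp
    also have "\<dots> = fps_const (prodA A (y # ys)) * fps_X ^ (length (y # ys) - 1)"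
    proof -
      have e: "length (y # ys) - 1 = Suc (length ys - 1)" using Cons by simp
      have f: "fps_const (prodA A (y # ys)) = fps_const (A z y) * fps_const (prodA A ys)"
        using Cons by simp
      show ?thesis unfolding e f by (simp only: power_Suc mult_ac)
    qed
    finally show ?thesis .
  qed
qed

lemma weight_append: "weight A b c (xs @ ys) = weight A b c xs * weight A b c ys"
  by (simp add: weight_def)

lemma weight_Cons: "weight A b c (e # es) = arc_weight A b c e * weight A b c es"
  by (simp add: weight_def)

lemma weight_walk:
  assumes "ys \<noteq> []"
  shows "weight A b c (path_arcs (In # map Nd ys @ [Out])) =
         fps_const (b (hd ys) * prodA A ys * c (last ys)) * fps_X ^ (length ys - 1)"
proof -
  have 1: "path_arcs (In # map Nd ys @ [Out]) = (In, Nd (hd ys)) # path_arcs (map Nd ys @ [Out])"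
    using assms by (cases ys) auto
  have 2: "path_arcs (map Nd ys @ [Out]) = path_arcs (map Nd ys) @ [(Nd (last ys), Out)]"
    using assms by (simp add: path_arcs_snoc last_map)
  have 3: "weight A b c (path_arcs (In # map Nd ys @ [Out])) =
     fps_const (b (hd ys)) * ((fps_const (prodA A ys) * fps_X ^ (length ys - 1)) * fps_const (c (last ys)))"
    unfolding 1 2 weight_Cons weight_append weight_inner[OF assms]
    by (simp add: weight_def)
  have f: "fps_const (b (hd ys) * prodA A ys * c (last ys)) =
     fps_const (b (hd ys)) * fps_const (prodA A ys) * fps_const (c (last ys))" by simp
  show ?thesis unfolding 3 f by (simp only: mult_ac)
qed

lemma fps_const_X_nth:
  fixes a :: "'a::comm_semiring_1"
  shows "fps_nth (fps_const a * fps_X ^ k) m = (if m = k then a else 0)"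
  unfolding fps_mult_left_const_nth fps_X_power_nth by simp

section \<open>Circuit classes\<close>

definition rep :: "node list set \<Rightarrow> node list" where
  "rep \<gamma> = (SOME xs. xs \<in> \<gamma>)"

lemma set_circ_arcs_mset: "mset (circ_arcs xs) = mset (circ_arcs ys) \<Longrightarrow> set (circ_arcs xs) = set (circ_arcs ys)"
  by (metis set_mset_mset)

lemma class_members:
  assumes "elem_circuit N \<delta>" "ys \<in> circ_class \<delta>"
  shows "set ys = set \<delta> \<and> mset (circ_arcs ys) = mset (circ_arcs \<delta>) \<and> elem_circuit N ys"
proof -
  obtain k where ys: "ys = rotate k \<delta>" using assms(2) unfolding circ_class_def by auto
  have m: "mset (circ_arcs ys) = mset (circ_arcs \<delta>)" unfolding ys by (rule mset_circ_arcs_rotate)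
  have "elem_circuit N ys"
    using assms(1) set_circ_arcs_mset[OF m] unfolding elem_circuit_def ys by auto
  then show ?thesis using m ys by simp
qed

lemma self_in_class: "\<delta> \<in> circ_class \<delta>"
  unfolding circ_class_def by (metis rangeI rotate0 id_apply)

lemma rep_in_class: "rep (circ_class \<delta>) \<in> circ_class \<delta>"
  unfolding rep_def by (rule someI[of _ \<delta>]) (rule self_in_class)

lemma rep_props:
  assumes "\<gamma> \<in> elem_circuit_classes N"
  shows "rep \<gamma> \<in> \<gamma> \<and> elem_circuit N (rep \<gamma>) \<and>
    (\<forall>ys\<in>\<gamma>. set ys = set (rep \<gamma>) \<and> mset (circ_arcs ys) = mset (circ_arcs (rep \<gamma>)))"
proof -
  obtain \<delta> where d: "elem_circuit N \<delta>" "\<gamma> = circ_class \<delta>"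
    using assms unfolding elem_circuit_classes_def by auto
  have r: "rep \<gamma> \<in> \<gamma>" using d rep_in_class by simp
  show ?thesis using class_members[OF d(1)] r d(2) by metis
qed

lemma class_weight_eq:
  assumes "elem_circuit N \<delta>"
  shows "class_weight A b c (circ_class \<delta>) = weight A b c (circ_arcs \<delta>)"
proof -
  have "mset (circ_arcs (rep (circ_class \<delta>))) = mset (circ_arcs \<delta>)"
    using class_members[OF assms rep_in_class] by simp
  then show ?thesis unfolding class_weight_def rep_def[symmetric] weight_wm by simp
qed

lemma class_weight_rep: "class_weight A b c \<gamma> = weight A b c (circ_arcs (rep \<gamma>))"
  unfolding class_weight_def rep_def ..

lemma circuit_no_In_Out:
  assumes "elem_circuit N r"
  shows "In \<notin> set r" "Out \<notin> set r"
proof -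
  have len: "length r = length (rotate1 r)" by simp
  have ar: "\<forall>e\<in>set (circ_arcs r). is_arc N e" using assms unfolding elem_circuit_def by simp
  show "In \<notin> set r"
  proof
    assume "In \<in> set r"
    then have "In \<in> set (map snd (circ_arcs r))" unfolding circ_arcs_def using len by simp
    then obtain e where "e \<in> set (circ_arcs r)" "snd e = In" by auto
    then have "is_arc N (fst e, In)" using ar by (metis prod.collapse)
    then show False by (cases "fst e") auto
  qed
  show "Out \<notin> set r"
  proof
    assume "Out \<in> set r"
    then have "Out \<in> set (map fst (circ_arcs r))" unfolding circ_arcs_def using len by simp
    then obtain e where "e \<in> set (circ_arcs r)" "fst e = Out" by auto
    then have "is_arc N (Out, snd e)" using ar by (metis prod.collapse)
    then show False by (cases "snd e") auto
  qed
qed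

lemma circ_weight0:
  assumes "elem_circuit N r"
  shows "fps_nth (weight A b c (circ_arcs r)) 0 = 0"
proof -
  obtain x r' where r: "r = x # r'" using assms unfolding elem_circuit_def by (cases r) auto
  obtain e es where ce: "circ_arcs r = e # es"
    using length_circ_arcs[of r] r by (cases "circ_arcs r") auto
  have "e \<in> set (circ_arcs r)" using ce by simp
  then have "fst e \<in> set r" "snd e \<in> set r" using circ_arcs_in_set by auto
  then have nn: "fst e \<noteq> In" "fst e \<noteq> Out" "snd e \<noteq> In" "snd e \<noteq> Out"
    using circuit_no_In_Out[OF assms] by metis+
  obtain u v where uv: "e = (u, v)" by (cases e)
  obtain i j where "e = (Nd i, Nd j)"
    using nn unfolding uv by (cases u; cases v) auto
  then have "fps_nth (arc_weight A b c e) 0 = 0" by simp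
  then show ?thesis unfolding ce weight_Cons by simp
qed

lemma class_weight0:
  assumes "\<gamma> \<in> elem_circuit_classes N"
  shows "fps_nth (class_weight A b c \<gamma>) 0 = 0"
  using rep_props[OF assms] circ_weight0 class_weight_rep by metis

definition NS :: "nat \<Rightarrow> node set" where
  "NS N = insert In (insert Out (Nd ` {1..N}))"

lemma finite_NS: "finite (NS N)"
  unfolding NS_def by simp

lemma arc_nodes: "is_arc N e \<Longrightarrow> fst e \<in> NS N \<and> snd e \<in> NS N"
  unfolding NS_def by (cases e; cases "fst e"; cases "snd e") auto

lemma path_nodes: "xs \<noteq> [] \<Longrightarrow> set xs \<subseteq> insert (hd xs) (snd ` set (path_arcs xs))"
proof -
  assume "xs \<noteq> []"
  have "map snd (path_arcs xs) = tl xs" unfolding path_arcs_def by (simp add: map_snd_zip_take)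
  then have "set (tl xs) = snd ` set (path_arcs xs)" by (metis set_map)
  then show ?thesis using \<open>xs \<noteq> []\<close> by (cases xs) auto
qed

lemma elem_paths_sub: "elem_paths N \<subseteq> {xs. set xs \<subseteq> NS N \<and> length xs \<le> card (NS N)}"
proof
  fix xs assume xs: "xs \<in> elem_paths N"
  have "set xs \<subseteq> NS N"
  proof -
    have "set xs \<subseteq> insert (hd xs) (snd ` set (path_arcs xs))" using xs path_nodes unfolding elem_paths_def by auto
    moreover have "hd xs \<in> NS N" using xs unfolding elem_paths_def NS_def by auto
    moreover have "snd ` set (path_arcs xs) \<subseteq> NS N" using xs arc_nodes unfolding elem_paths_def by blast
    ultimately show ?thesis by blast
  qed
  moreover have "length xs \<le> card (NS N)"
  proof -
    have "distinct xs" using xs unfolding elem_paths_def by simp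
    then have "length xs = card (set xs)" by (simp add: distinct_card)
    also have "\<dots> \<le> card (NS N)" using \<open>set xs \<subseteq> NS N\<close> finite_NS by (rule card_mono[rotated])
    finally show ?thesis .
  qed
  ultimately show "xs \<in> {xs. set xs \<subseteq> NS N \<and> length xs \<le> card (NS N)}" by simp
qed

lemma finite_elem_paths: "finite (elem_paths N)"
  using finite_subset[OF elem_paths_sub finite_lists_length_le[OF finite_NS]] .

lemma elem_circuits_sub: "{xs. elem_circuit N xs} \<subseteq> {xs. set xs \<subseteq> NS N \<and> length xs \<le> card (NS N)}"
proof
  fix xs assume xs: "xs \<in> {xs. elem_circuit N xs}"
  have "set xs \<subseteq> NS N"
  proof -
    have "map fst (circ_arcs xs) = xs" unfolding circ_arcs_def by simp
    then have "set xs = fst ` set (circ_arcs xs)" by (metis set_map)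
    then show ?thesis using xs arc_nodes unfolding elem_circuit_def by auto
  qed
  moreover have "length xs \<le> card (NS N)"
  proof -
    have "distinct xs" using xs unfolding elem_circuit_def by simp
    then have "length xs = card (set xs)" by (simp add: distinct_card)
    also have "\<dots> \<le> card (NS N)" using \<open>set xs \<subseteq> NS N\<close> finite_NS by (rule card_mono[rotated])
    finally show ?thesis .
  qed
  ultimately show "xs \<in> {xs. set xs \<subseteq> NS N \<and> length xs \<le> card (NS N)}" by simp
qed

lemma finite_classes: "finite (elem_circuit_classes N)"
  unfolding elem_circuit_classes_def
  by (rule finite_imageI, rule finite_subset[OF elem_circuits_sub], rule finite_lists_length_le[OF finite_NS])

lemma finite_acc: "finite (accessible_sets N p)"
  by (rule finite_subset[of _ "Pow (elem_circuit_classes N)"]) (auto simp: accessible_sets_def finite_classes)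

lemma acc_finite_C: "C \<in> accessible_sets N p \<Longrightarrow> finite C"
  unfolding accessible_sets_def using finite_classes finite_subset by blast

lemma matpow_upper:
  fixes A :: "nat \<Rightarrow> nat \<Rightarrow> 'a::idem_comm_semiring_1"
  shows "i \<in> {1..N} \<Longrightarrow> j \<in> {1..N} \<Longrightarrow>
    (\<And>ys. set ys \<subseteq> {1..N} \<Longrightarrow> length ys = Suc k \<Longrightarrow> hd ys = j \<Longrightarrow> last ys = i \<Longrightarrow> ile (prodA A ys * x) s)
    \<Longrightarrow> ile (matpow N A k i j * x) s"
proof (induction k arbitrary: i x)
  case 0
  show ?case
  proof (cases "i = j")
    case True
    have "ile (prodA A [i] * x) s" using 0 True by (intro "0.prems"(3)) auto
    then show ?thesis using True by simp
  next
    case False then show ?thesis by (simp add: ile_zero)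
  qed
next
  case (Suc k)
  have eq: "matpow N A (Suc k) i j * x = (\<Sum>l\<in>{1..N}. matpow N A k l j * (A i l * x))"
  proof -
    have "matpow N A (Suc k) i j * x = (\<Sum>l\<in>{1..N}. A i l * matpow N A k l j) * x" by simp
    also have "\<dots> = (\<Sum>l\<in>{1..N}. A i l * matpow N A k l j * x)" by (rule sum_distrib_right)
    also have "\<dots> = (\<Sum>l\<in>{1..N}. matpow N A k l j * (A i l * x))"
      by (intro sum.cong refl) (simp only: mult_ac)
    finally show ?thesis .
  qed
  have "ile (\<Sum>l\<in>{1..N}. matpow N A k l j * (A i l * x)) s"
  proof (rule ile_sum_bound)
    fix l assume l: "l \<in> {1..N}"
    show "ile (matpow N A k l j * (A i l * x)) s"
    proof (rule Suc.IH[OF l Suc.prems(2)])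
      fix ys assume ys: "set ys \<subseteq> {1..N}" "length ys = Suc k" "hd ys = j" "last ys = l"
      have ne: "ys \<noteq> []" using ys(2) by auto
      have "ile (prodA A (ys @ [i]) * x) s"
        using ys ne Suc.prems(1) by (intro Suc.prems(3)) auto
      moreover have "prodA A (ys @ [i]) * x = prodA A ys * (A i l * x)"
        using ne ys(4) by (simp add: prodA_snoc mult_ac)
      ultimately show "ile (prodA A ys * (A i l * x)) s" by simp
    qed
  qed simp
  then show ?case by (simp only: eq)
qed

lemma matpow_lower:
  fixes A :: "nat \<Rightarrow> nat \<Rightarrow> 'a::idem_comm_semiring_1"
  shows "ys \<noteq> [] \<Longrightarrow> set ys \<subseteq> {1..N} \<Longrightarrow> ile (prodA A ys) (matpow N A (length ys - 1) (last ys) (hd ys))"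
proof (induction ys rule: rev_induct)
  case Nil then show ?case by simp
next
  case (snoc i ys)
  show ?case
  proof (cases "ys = []")
    case True then show ?thesis by (simp add: ile_refl)
  next
    case False
    define l where "l = last ys"
    define k where "k = length ys - 1"
    define j where "j = hd ys"
    have "last ys \<in> set ys" using False by simp
    then have l: "l \<in> {1..N}" using snoc.prems(2) unfolding l_def by auto
    have sy: "set ys \<subseteq> {1..N}" using snoc.prems(2) by simp
    have IH: "ile (prodA A ys) (matpow N A k l j)"
      using snoc.IH[OF False sy] unfolding l_def k_def j_def .
    have 1: "prodA A (ys @ [i]) = prodA A ys * A i l" using False by (simp add: prodA_snoc l_def)
    have 2: "matpow N A (length (ys @ [i]) - 1) (last (ys @ [i])) (hd (ys @ [i])) =
       (\<Sum>l\<in>{1..N}. A i l * matpow N A k l j)"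
    proof -
      have a: "length (ys @ [i]) - 1 = Suc k" using False unfolding k_def by simp
      have b: "last (ys @ [i]) = i" "hd (ys @ [i]) = j" using False unfolding j_def by simp_all
      show ?thesis unfolding a b by (simp only: matpow.simps)
    qed
    have c1: "ile (prodA A ys * A i l) (matpow N A k l j * A i l)"
      by (rule ile_mult_right[OF IH])
    have c2: "ile (A i l * matpow N A k l j) (\<Sum>l\<in>{1..N}. A i l * matpow N A k l j)"
      by (rule ile_sum_member[OF _ l]) simp
    have c3: "A i l * matpow N A k l j = matpow N A k l j * A i l"
      by (rule mult.commute)
    have "ile (prodA A ys * A i l) (\<Sum>l\<in>{1..N}. A i l * matpow N A k l j)"
      using ile_trans[OF c1 c2[unfolded c3]] .
    then show ?thesis unfolding 1 2 .
  qed
qed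

section \<open>Truncations\<close>

lemma kstar_trunc:
  assumes "fps_nth U 0 = 0" "j \<le> T"
  shows "fps_nth (fps_kstar U) j = fps_nth (\<Sum>k\<le>T. U ^ k) j"
proof -
  have "fps_nth (fps_kstar U) j = (\<Sum>k\<le>j. fps_nth (U ^ k) j)" unfolding fps_kstar_def by simp
  also have "\<dots> = (\<Sum>k\<le>T. fps_nth (U ^ k) j)"
  proof (rule sum.mono_neutral_left)
    show "\<forall>i\<in>{..T} - {..j}. fps_nth (U ^ i) j = 0"
      using startsby_zero_power_prefix[OF assms(1)] by auto
  qed (use assms in auto)
  finally show ?thesis by (simp add: fps_sum_nth)
qed

lemma kplus_trunc:
  assumes "fps_nth U 0 = 0" "m \<le> Suc T"
  shows "fps_nth (fps_kplus U) m = fps_nth (\<Sum>k\<in>{1..Suc T}. U ^ k) m"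
proof -
  define S where "S = (\<Sum>k\<le>T. U ^ k)"
  have "fps_nth (fps_kplus U) m = (\<Sum>i=0..m. fps_nth U i * fps_nth (fps_kstar U) (m - i))"
    unfolding fps_kplus_def fps_mult_nth ..
  also have "\<dots> = (\<Sum>i=0..m. fps_nth U i * fps_nth S (m - i))"
  proof (rule sum.cong[OF refl])
    fix i assume "i \<in> {0..m}"
    show "fps_nth U i * fps_nth (fps_kstar U) (m - i) = fps_nth U i * fps_nth S (m - i)"
    proof (cases "i = 0")
      case True then show ?thesis using assms(1) by simp
    next
      case False then show ?thesis using kstar_trunc[OF assms(1), of "m - i" T] assms(2) unfolding S_def by simp
    qed
  qed
  also have "\<dots> = fps_nth (U * S) m" unfolding fps_mult_nth ..
  also have "U * S = (\<Sum>k\<in>{1..Suc T}. U ^ k)"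
  proof -
    have "U * S = (\<Sum>k=0..T. U ^ Suc k)" unfolding S_def by (simp add: sum_distrib_left atLeast0AtMost)
    also have "\<dots> = (\<Sum>k\<in>{Suc 0..Suc T}. U ^ k)" by (rule sum.shift_bounds_cl_Suc_ivl[symmetric])
    finally show ?thesis by simp
  qed
  finally show ?thesis .
qed

lemma mult_trunc:
  assumes "\<And>m. m \<le> n \<Longrightarrow> fps_nth P m = fps_nth Q m"
  shows "fps_nth (w * P) n = fps_nth (w * Q) n"
  unfolding fps_mult_nth using assms by (intro sum.cong) auto

lemma prod_trunc:
  assumes "finite C" "\<And>\<gamma> m. \<gamma> \<in> C \<Longrightarrow> m \<le> n \<Longrightarrow> fps_nth (F \<gamma>) m = fps_nth (G \<gamma>) m"
  shows "m \<le> n \<Longrightarrow> fps_nth (\<Prod>\<gamma>\<in>C. F \<gamma>) m = fps_nth (\<Prod>\<gamma>\<in>C. G \<gamma>) m"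
  using assms
proof (induction C arbitrary: m rule: finite_induct)
  case empty then show ?case by simp
next
  case (insert x F')
  have "fps_nth (F x * (\<Prod>\<gamma>\<in>F'. F \<gamma>)) m = fps_nth (G x * (\<Prod>\<gamma>\<in>F'. G \<gamma>)) m"
    unfolding fps_mult_nth using insert by (intro sum.cong) auto
  then show ?case using insert(1,2) by simp
qed

lemma prod_mset_image_count:
  "prod_mset (image_mset g M) = (\<Prod>x\<in>set_mset M. (g x :: 'b::comm_monoid_mult) ^ count M x)"
proof (induction M)
  case empty then show ?case by simp
next
  case (add x M)
  show ?case
  proof (cases "x \<in># M")
    case True
    have fin: "finite (set_mset M)" by simp
    define R where "R = (\<Prod>y\<in>set_mset M - {x}. g y ^ count M y)"
    have e1: "(\<Prod>y\<in>set_mset (add_mset x M). g y ^ count (add_mset x M) y) =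
          g x ^ Suc (count M x) * (\<Prod>y\<in>set_mset M - {x}. g y ^ count (add_mset x M) y)"
      using True by (simp add: prod.remove[OF fin] insert_absorb)
    have e2: "(\<Prod>y\<in>set_mset M - {x}. g y ^ count (add_mset x M) y) = R"
      unfolding R_def by (intro prod.cong) auto
    have e3: "(\<Prod>y\<in>set_mset M. g y ^ count M y) = g x ^ count M x * R"
      unfolding R_def using True by (simp add: prod.remove[OF fin])
    have "prod_mset (image_mset g (add_mset x M)) = g x * prod_mset (image_mset g M)" by simp
    also have "\<dots> = g x * (g x ^ count M x * R)" using add.IH e3 by simp
    also have "\<dots> = g x ^ Suc (count M x) * R" by (simp only: power_Suc mult.assoc)
    finally show ?thesis using e1 e2 by simp
  next
    case False
    have c0: "count M x = 0" using False by (simp add: count_eq_zero_iff)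
    have "(\<Prod>y\<in>set_mset (add_mset x M). g y ^ count (add_mset x M) y) =
          g x * (\<Prod>y\<in>set_mset M. g y ^ count (add_mset x M) y)"
      using False c0 by simp
    also have "(\<Prod>y\<in>set_mset M. g y ^ count (add_mset x M) y) = (\<Prod>y\<in>set_mset M. g y ^ count M y)"
      using False by (intro prod.cong) auto
    finally show ?thesis using add.IH by simp
  qed
qed

lemma set_mset_sum_mset: "set_mset (\<Sum>x\<in>#M. f x) = (\<Union>x\<in>set_mset M. set_mset (f x))"
  by (induction M) auto

lemma size_sum_mset_ge:
  fixes f :: "'b \<Rightarrow> 'c multiset"
  shows "(\<And>x. x \<in># M \<Longrightarrow> size (f x) \<ge> 1) \<Longrightarrow> size M \<le> size (\<Sum>x\<in>#M. f x)"
proof (induction M)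
  case empty then show ?case by simp
next
  case (add x M)
  then have "size M \<le> size (\<Sum>x\<in>#M. f x)" "size (f x) \<ge> 1" by auto
  moreover have "size (f x + (\<Sum>x\<in>#M. f x)) = size (f x) + size (\<Sum>x\<in>#M. f x)" by (rule size_union)
  moreover have "size (add_mset x M) = Suc (size M)" by simp
  moreover have "size (\<Sum>x\<in>#add_mset x M. f x) = size (f x) + size (\<Sum>x\<in>#M. f x)"
    by (simp only: sum_mset.add_mset image_mset_add_mset size_union)
  ultimately show ?case by linarith
qed

section \<open>Construction of walks\<close>

lemma pa_split:
  "path_arcs (us @ v # ws @ v # zs) = path_arcs (us @ [v]) @ circ_arcs (v # ws) @ path_arcs (v # zs)"
proof -
  have "path_arcs (us @ v # ws @ v # zs) = path_arcs (us @ [v]) @ path_arcs ((v # ws) @ v # zs)"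
    using path_arcs_append[of us v "ws @ v # zs"] by simp
  also have "path_arcs ((v # ws) @ v # zs) = path_arcs ((v # ws) @ [v]) @ path_arcs (v # zs)"
    by (rule path_arcs_append)
  finally show ?thesis by (simp add: circ_arcs_path)
qed

lemma insert_once:
  assumes w: "walk N xs" and d: "elem_circuit N \<delta>" and v: "v \<in> set xs" "v \<in> set \<delta>"
  shows "\<exists>xs'. walk N xs' \<and> mset (path_arcs xs') = mset (path_arcs xs) + mset (circ_arcs \<delta>) \<and>
     set xs' = set xs \<union> set \<delta>"
proof -
  obtain as bs where \<delta>: "\<delta> = as @ v # bs" using split_list[OF v(2)] by blast
  define \<delta>' where "\<delta>' = v # bs @ as"
  have rot: "\<delta>' = rotate (length as) \<delta>" unfolding \<delta> \<delta>'_def by (simp add: rotate_append)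
  have m: "mset (circ_arcs \<delta>') = mset (circ_arcs \<delta>)" using rot mset_circ_arcs_rotate by simp
  have sd: "set \<delta>' = set \<delta>" unfolding \<delta> \<delta>'_def by auto
  obtain us zs where xs: "xs = us @ v # zs" using split_list[OF v(1)] by blast
  define xs' where "xs' = us @ v # (bs @ as) @ v # zs"
  have pa: "path_arcs xs' = path_arcs (us @ [v]) @ circ_arcs \<delta>' @ path_arcs (v # zs)"
    unfolding xs'_def \<delta>'_def by (rule pa_split)
  have pa0: "path_arcs xs = path_arcs (us @ [v]) @ path_arcs (v # zs)"
    unfolding xs by (rule path_arcs_append)
  have wx: "xs \<noteq> []" "hd xs = In" "last xs = Out" "\<forall>e\<in>set (path_arcs xs). is_arc N e"
    using w unfolding walk_def by auto
  have "hd xs' = In" using wx(2) unfolding xs xs'_def by (cases us) auto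
  moreover have "last xs' = Out" using wx(3) unfolding xs xs'_def by (cases zs) auto
  moreover have "\<forall>e\<in>set (circ_arcs \<delta>'). is_arc N e"
    using d set_circ_arcs_mset[OF m] unfolding elem_circuit_def by auto
  then have "\<forall>e\<in>set (path_arcs xs'). is_arc N e" using wx(4) pa pa0 by auto
  ultimately have "walk N xs'" unfolding walk_def xs'_def by simp
  moreover have "mset (path_arcs xs') = mset (path_arcs xs) + mset (circ_arcs \<delta>)"
    using pa pa0 m by simp
  moreover have "set xs' = set xs \<union> set \<delta>" using sd unfolding xs xs'_def \<delta>'_def by auto
  ultimately show ?thesis by blast
qed

lemma insert_rep:
  assumes w: "walk N xs" and d: "elem_circuit N \<delta>" and v: "v \<in> set xs" "v \<in> set \<delta>"
  shows "\<exists>xs'. walk N xs' \<and> mset (path_arcs xs') = mset (path_arcs xs) + repeat_mset (Suc k) (mset (circ_arcs \<delta>)) \<and>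
     set xs' = set xs \<union> set \<delta>"
proof (induction k)
  case 0 then show ?case using insert_once[OF w d v] by simp
next
  case (Suc k)
  then obtain xs1 where x1: "walk N xs1" "mset (path_arcs xs1) = mset (path_arcs xs) + repeat_mset (Suc k) (mset (circ_arcs \<delta>))"
    "set xs1 = set xs \<union> set \<delta>" by blast
  have "v \<in> set xs1" using x1(3) v by simp
  then obtain xs2 where x2: "walk N xs2" "mset (path_arcs xs2) = mset (path_arcs xs1) + mset (circ_arcs \<delta>)"
    "set xs2 = set xs1 \<union> set \<delta>" using insert_once[OF x1(1) d _ v(2)] by blast
  have "mset (path_arcs xs2) = mset (path_arcs xs) + repeat_mset (Suc (Suc k)) (mset (circ_arcs \<delta>))"
    using x2(2) x1(2) by (simp add: add_ac)
  moreover have "set xs2 = set xs \<union> set \<delta>" using x2(3) x1(3) by auto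
  ultimately show ?case using x2(1) by blast
qed

lemma build:
  assumes p: "p \<in> elem_paths N" and C: "C \<subseteq> elem_circuit_classes N" "accessible p C"
    and f: "\<forall>\<gamma>\<in>C. f \<gamma> \<ge> (1::nat)"
  shows "\<exists>xs. walk N xs \<and> mset (path_arcs xs) =
     mset (path_arcs p) + (\<Sum>\<gamma>\<in>C. repeat_mset (f \<gamma>) (mset (circ_arcs (rep \<gamma>))))"
proof -
  have fin: "finite C" using C(1) finite_classes finite_subset by blast
  have pp: "p \<noteq> []" "hd p = In" "last p = Out" "distinct p" "\<forall>e\<in>set (path_arcs p). is_arc N e"
    using p unfolding elem_paths_def by auto
  define E where "E = set (path_arcs p) \<union> (\<Union>\<gamma>\<in>C. \<Union>ys\<in>\<gamma>. set (circ_arcs ys))"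
  define V where "V = set p \<union> (\<Union>\<gamma>\<in>C. \<Union>ys\<in>\<gamma>. set ys)"
  have acc: "\<forall>a\<in>V. \<forall>b\<in>V. (a, b) \<in> (E \<union> E\<inverse>)\<^sup>*"
    using C(2) unfolding accessible_def Let_def E_def V_def by simp
  have main: "k \<le> card C \<Longrightarrow> \<exists>D xs. D \<subseteq> C \<and> card D = k \<and> walk N xs \<and>
     mset (path_arcs xs) = mset (path_arcs p) + (\<Sum>\<gamma>\<in>D. repeat_mset (f \<gamma>) (mset (circ_arcs (rep \<gamma>)))) \<and>
     set xs = set p \<union> (\<Union>\<gamma>\<in>D. set (rep \<gamma>))" for k
  proof (induction k)
    case 0
    have "walk N p" using pp unfolding walk_def by simp
    then show ?case by (intro exI[of _ "{}"] exI[of _ p]) simp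
  next
    case (Suc k)
    then obtain D xs where D: "D \<subseteq> C" "card D = k" "walk N xs"
      "mset (path_arcs xs) = mset (path_arcs p) + (\<Sum>\<gamma>\<in>D. repeat_mset (f \<gamma>) (mset (circ_arcs (rep \<gamma>))))"
      "set xs = set p \<union> (\<Union>\<gamma>\<in>D. set (rep \<gamma>))" by auto
    have finD: "finite D" using D(1) fin finite_subset by blast
    have "D \<noteq> C" using D(2) Suc.prems by auto
    then obtain \<gamma>0 where g0: "\<gamma>0 \<in> C" "\<gamma>0 \<notin> D" using D(1) by blast
    have ex: "\<exists>\<gamma>\<in>C - D. set (rep \<gamma>) \<inter> set xs \<noteq> {}"
    proof (rule ccontr)
      assume H: "\<not> ?thesis"
      have rp0: "rep \<gamma>0 \<in> \<gamma>0" "elem_circuit N (rep \<gamma>0)" using rep_props[of \<gamma>0 N] g0 C(1) by auto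
      then obtain u where u: "u \<in> set (rep \<gamma>0)" unfolding elem_circuit_def by (cases "rep \<gamma>0") auto
      have uV: "u \<in> V" unfolding V_def using g0(1) rp0(1) u by blast
      have InV: "In \<in> V" unfolding V_def using pp by (cases p) auto
      have reach: "(In, u) \<in> (E \<union> E\<inverse>)\<^sup>*" using acc uV InV by blast
      have key: "a \<in> set xs \<longleftrightarrow> b \<in> set xs" if ab: "(a, b) \<in> E" for a b
      proof (cases "(a, b) \<in> set (path_arcs p)")
        case True
        then have "a \<in> set p" "b \<in> set p" using path_arcs_in_set by fastforce+
        then show ?thesis using D(5) by auto
      next
        case False
        then obtain \<gamma> ys where g: "\<gamma> \<in> C" "ys \<in> \<gamma>" "(a, b) \<in> set (circ_arcs ys)"
          using ab unfolding E_def by blast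
        have "a \<in> set ys" "b \<in> set ys" using circ_arcs_in_set[OF g(3)] by auto
        moreover have "set ys = set (rep \<gamma>)" using rep_props[of \<gamma> N] g C(1) by auto
        ultimately have ab': "a \<in> set (rep \<gamma>)" "b \<in> set (rep \<gamma>)" by auto
        show ?thesis
        proof (cases "\<gamma> \<in> D")
          case True then show ?thesis using ab' D(5) by auto
        next
          case False
          then have "set (rep \<gamma>) \<inter> set xs = {}" using H g(1) by blast
          then show ?thesis using ab' by auto
        qed
      qed
      have stp: "b \<in> set xs" if "a \<in> set xs" "(a, b) \<in> E \<union> E\<inverse>" for a b
        using that key by blast
      have "In \<in> set xs" using D(5) pp by (cases p) auto
      have "u \<in> set xs"
        using reach
      proof (induction rule: rtrancl_induct)
        case base then show ?case by fact
      next
        case (step y z) then show ?case using stp by blast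
      qed
      then show False using H g0 u by blast
    qed
    then obtain \<gamma> v where g: "\<gamma> \<in> C" "\<gamma> \<notin> D" "v \<in> set (rep \<gamma>)" "v \<in> set xs" by blast
    have ec: "elem_circuit N (rep \<gamma>)" using rep_props[of \<gamma> N] g C(1) by auto
    have fg: "Suc (f \<gamma> - 1) = f \<gamma>" using f g(1) by auto
    obtain xs' where x': "walk N xs'"
      "mset (path_arcs xs') = mset (path_arcs xs) + repeat_mset (Suc (f \<gamma> - 1)) (mset (circ_arcs (rep \<gamma>)))"
      "set xs' = set xs \<union> set (rep \<gamma>)"
      using insert_rep[OF D(3) ec g(4) g(3)] by blast
    show ?case
    proof (intro exI[of _ "insert \<gamma> D"] exI[of _ xs'] conjI)
      show "insert \<gamma> D \<subseteq> C" using D(1) g(1) by simp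
      show "card (insert \<gamma> D) = Suc k" using finD g(2) D(2) by simp
      show "walk N xs'" by fact
      show "mset (path_arcs xs') = mset (path_arcs p) +
          (\<Sum>\<gamma>\<in>insert \<gamma> D. repeat_mset (f \<gamma>) (mset (circ_arcs (rep \<gamma>))))"
        using x'(2) D(4) finD g(2) unfolding fg by (simp add: add_ac)
      show "set xs' = set p \<union> (\<Union>\<gamma>\<in>insert \<gamma> D. set (rep \<gamma>))"
        using x'(3) D(5) by auto
    qed
  qed
  obtain D xs where D: "D \<subseteq> C" "card D = card C" "walk N xs"
    "mset (path_arcs xs) = mset (path_arcs p) + (\<Sum>\<gamma>\<in>D. repeat_mset (f \<gamma>) (mset (circ_arcs (rep \<gamma>))))"
    using main[of "card C"] by auto
  have "D = C" using card_subset_eq[OF fin D(1) D(2)] .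
  then show ?thesis using D by blast
qed

lemma conn_walk:
  "\<forall>u\<in>set xs. \<forall>v\<in>set xs. (u, v) \<in> (set (path_arcs xs) \<union> (set (path_arcs xs))\<inverse>)\<^sup>*"
proof (intro ballI)
  fix u v assume u: "u \<in> set xs" and v: "v \<in> set xs"
  let ?E = "set (path_arcs xs)"
  have 1: "(hd xs, u) \<in> ?E\<^sup>*" "(hd xs, v) \<in> ?E\<^sup>*" using reach_from_hd u v by auto
  have "(u, hd xs) \<in> (?E\<inverse>)\<^sup>*" using rtrancl_converseI[OF 1(1)] .
  then have a: "(u, hd xs) \<in> (?E \<union> ?E\<inverse>)\<^sup>*" by (rule rtrancl_mono[THEN subsetD, rotated]) auto
  have b: "(hd xs, v) \<in> (?E \<union> ?E\<inverse>)\<^sup>*" using 1(2) by (rule rtrancl_mono[THEN subsetD, rotated]) auto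
  show "(u, v) \<in> (?E \<union> ?E\<inverse>)\<^sup>*" using rtrancl_trans[OF a b] .
qed

lemma union_class_sets:
  assumes "\<forall>\<delta>\<in>#M. elem_circuit N \<delta>"
  shows "(\<Union>\<gamma>\<in>circ_class ` set_mset M. \<Union>ys\<in>\<gamma>. set ys) = (\<Union>\<delta>\<in>set_mset M. set \<delta>)"
    and "(\<Union>\<gamma>\<in>circ_class ` set_mset M. \<Union>ys\<in>\<gamma>. set (circ_arcs ys)) = (\<Union>\<delta>\<in>set_mset M. set (circ_arcs \<delta>))"
proof -
  have a: "(\<Union>ys\<in>circ_class \<delta>. set ys) = set \<delta>" if "\<delta> \<in># M" for \<delta>
    using class_members[of N \<delta>] assms that self_in_class[of \<delta>] by blast
  have b: "(\<Union>ys\<in>circ_class \<delta>. set (circ_arcs ys)) = set (circ_arcs \<delta>)" if "\<delta> \<in># M" for \<delta>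
  proof -
    have "\<forall>ys\<in>circ_class \<delta>. set (circ_arcs ys) = set (circ_arcs \<delta>)"
      using class_members[of N \<delta>] assms that set_circ_arcs_mset by blast
    then show ?thesis using self_in_class[of \<delta>] by blast
  qed
  show "(\<Union>\<gamma>\<in>circ_class ` set_mset M. \<Union>ys\<in>\<gamma>. set ys) = (\<Union>\<delta>\<in>set_mset M. set \<delta>)"
    using a by simp
  show "(\<Union>\<gamma>\<in>circ_class ` set_mset M. \<Union>ys\<in>\<gamma>. set (circ_arcs ys)) = (\<Union>\<delta>\<in>set_mset M. set (circ_arcs \<delta>))"
    using b by simp
qed

lemma dir1:
  fixes A :: "nat \<Rightarrow> nat \<Rightarrow> 'a::idem_comm_semiring_1" and b c :: "nat \<Rightarrow> 'a"
  assumes ys: "ys \<noteq> []" "set ys \<subseteq> {1..N}" "length ys = Suc n"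
  shows "\<exists>p C g. p \<in> elem_paths N \<and> C \<in> accessible_sets N p \<and> g \<in> PiE C (\<lambda>_. {1..Suc (Suc n)}) \<and>
     fps_nth (weight A b c (path_arcs p) * (\<Prod>\<gamma>\<in>C. class_weight A b c \<gamma> ^ g \<gamma>)) n = b (hd ys) * prodA A ys * c (last ys)"
proof -
  define xs where "xs = In # map Nd ys @ [Out]"
  have w: "walk N xs" using walk_of ys unfolding xs_def by blast
  obtain p M where pM: "p \<in> elem_paths N" "\<forall>\<delta>\<in>#M. elem_circuit N \<delta>"
     "mset (path_arcs xs) = mset (path_arcs p) + (\<Sum>\<delta>\<in>#M. mset (circ_arcs \<delta>))"
     "set xs = set p \<union> (\<Union>\<delta>\<in>set_mset M. set \<delta>)" using decomp[OF w] by blast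
  define M' where "M' = image_mset circ_class M"
  define C where "C = set_mset M'"
  define g where "g = restrict (count M') C"
  have C_img: "C = circ_class ` set_mset M" unfolding C_def M'_def by simp
  have im: "image_mset (\<lambda>\<delta>. weight A b c (circ_arcs \<delta>)) M = image_mset (\<lambda>\<delta>. class_weight A b c (circ_class \<delta>)) M"
    by (rule image_mset_cong) (use class_weight_eq pM(2) in metis)
  have "weight A b c (path_arcs xs) = weight A b c (path_arcs p) * (\<Prod>\<delta>\<in>#M. weight A b c (circ_arcs \<delta>))"
    unfolding weight_wm[of A b c "path_arcs xs"] pM(3) wm_plus wm_sum_mset weight_wm ..
  also have "(\<Prod>\<delta>\<in>#M. weight A b c (circ_arcs \<delta>)) = prod_mset (image_mset (class_weight A b c) M')"
    unfolding im M'_def by (simp add: multiset.map_comp comp_def)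
  also have "\<dots> = (\<Prod>\<gamma>\<in>C. class_weight A b c \<gamma> ^ count M' \<gamma>)"
    unfolding C_def by (rule prod_mset_image_count)
  also have "\<dots> = (\<Prod>\<gamma>\<in>C. class_weight A b c \<gamma> ^ g \<gamma>)"
    unfolding g_def by (intro prod.cong) auto
  finally have W: "weight A b c (path_arcs xs) = weight A b c (path_arcs p) * (\<Prod>\<gamma>\<in>C. class_weight A b c \<gamma> ^ g \<gamma>)" .
  have "weight A b c (path_arcs xs) = fps_const (b (hd ys) * prodA A ys * c (last ys)) * fps_X ^ n"
    unfolding xs_def weight_walk[OF ys(1)] using ys(3) by simp
  then have coeff: "fps_nth (weight A b c (path_arcs p) * (\<Prod>\<gamma>\<in>C. class_weight A b c \<gamma> ^ g \<gamma>)) n = b (hd ys) * prodA A ys * c (last ys)"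
    using W fps_const_X_nth by metis
  have Csub: "C \<subseteq> elem_circuit_classes N"
    unfolding C_img elem_circuit_classes_def using pM(2) by auto
  have setE: "set (path_arcs xs) = set (path_arcs p) \<union> (\<Union>\<delta>\<in>set_mset M. set (circ_arcs \<delta>))"
  proof -
    have "set (path_arcs xs) = set_mset (mset (path_arcs xs))" by simp
    also have "\<dots> = set (path_arcs p) \<union> (\<Union>\<delta>\<in>set_mset M. set (circ_arcs \<delta>))"
      unfolding pM(3) set_mset_union set_mset_sum_mset by simp
    finally show ?thesis .
  qed
  have "accessible p C"
    unfolding accessible_def Let_def C_img union_class_sets[OF pM(2)]
    using conn_walk[of xs] setE pM(4) by simp
  then have Cacc: "C \<in> accessible_sets N p" using Csub unfolding accessible_sets_def by simp
  have "size M \<le> size (\<Sum>\<delta>\<in>#M. mset (circ_arcs \<delta>))"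
  proof (rule size_sum_mset_ge)
    fix \<delta> assume "\<delta> \<in># M"
    then have "\<delta> \<noteq> []" using pM(2) unfolding elem_circuit_def by auto
    then show "1 \<le> size (mset (circ_arcs \<delta>))" by (simp add: length_circ_arcs Suc_le_eq)
  qed
  also have "\<dots> \<le> size (mset (path_arcs xs))" unfolding pM(3) by simp
  also have "\<dots> = Suc (Suc n)" unfolding xs_def using ys(3) by (simp add: length_path_arcs)
  finally have sz: "size M' \<le> Suc (Suc n)" unfolding M'_def by simp
  have "g \<in> PiE C (\<lambda>_. {1..Suc (Suc n)})"
    unfolding g_def restrict_PiE_iff
  proof
    fix \<gamma> assume "\<gamma> \<in> C"
    then have "count M' \<gamma> \<ge> 1" unfolding C_def by (simp add: Suc_le_eq)
    moreover have "count M' \<gamma> \<le> size M'" by (rule count_le_size)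
    ultimately show "count M' \<gamma> \<in> {1..Suc (Suc n)}" using sz by simp
  qed
  then show ?thesis using pM(1) Cacc coeff by blast
qed

lemma dir2:
  fixes A :: "nat \<Rightarrow> nat \<Rightarrow> 'a::idem_comm_semiring_1" and b c :: "nat \<Rightarrow> 'a"
  assumes p: "p \<in> elem_paths N" and C: "C \<in> accessible_sets N p" and g: "\<forall>\<gamma>\<in>C. g \<gamma> \<ge> (1::nat)"
  shows "\<exists>ys. ys \<noteq> [] \<and> set ys \<subseteq> {1..N} \<and> weight A b c (path_arcs p) * (\<Prod>\<gamma>\<in>C. class_weight A b c \<gamma> ^ g \<gamma>) =
     fps_const (b (hd ys) * prodA A ys * c (last ys)) * fps_X ^ (length ys - 1)"
proof -
  have C': "C \<subseteq> elem_circuit_classes N" "accessible p C" using C unfolding accessible_sets_def by auto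
  have fin: "finite C" using acc_finite_C[OF C] .
  obtain xs where xs: "walk N xs"
    "mset (path_arcs xs) = mset (path_arcs p) + (\<Sum>\<gamma>\<in>C. repeat_mset (g \<gamma>) (mset (circ_arcs (rep \<gamma>))))"
    using build[OF p C' g] by blast
  obtain ys where ys: "ys \<noteq> []" "set ys \<subseteq> {1..N}" "xs = In # map Nd ys @ [Out]"
    using walk_form[OF xs(1)] by blast
  have "weight A b c (path_arcs xs) = weight A b c (path_arcs p) * (\<Prod>\<gamma>\<in>C. class_weight A b c \<gamma> ^ g \<gamma>)"
    unfolding weight_wm[of A b c "path_arcs xs"] xs(2) wm_plus wm_sum[OF fin] wm_repeat class_weight_rep weight_wm ..
  then show ?thesis using weight_walk[OF ys(1), of A b c] ys by metis
qed

theorem proposition1: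
  fixes N :: nat
    and A :: "nat \<Rightarrow> nat \<Rightarrow> 'a::idem_comm_semiring_1"
    and b c :: "nat \<Rightarrow> 'a"
  assumes "N \<ge> 1"
  shows "S_series N A b c =
    (\<Sum>p\<in>elem_paths N. weight A b c (path_arcs p) *
       (\<Sum>C\<in>accessible_sets N p. \<Prod>\<gamma>\<in>C. fps_kplus (class_weight A b c \<gamma>)))"
proof (rule fps_ext)
  fix n
  define K where "K = {1..Suc (Suc n)}"
  define tm where "tm p C g = fps_nth (weight A b c (path_arcs p) * (\<Prod>\<gamma>\<in>C. class_weight A b c \<gamma> ^ g \<gamma>)) n"
    for p C and g :: "node list set \<Rightarrow> nat"
  define L where "L = fps_nth (S_series N A b c) n"
  define R where "R = fps_nth (\<Sum>p\<in>elem_paths N. weight A b c (path_arcs p) *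
       (\<Sum>C\<in>accessible_sets N p. \<Prod>\<gamma>\<in>C. fps_kplus (class_weight A b c \<gamma>))) n"
  have L_eq: "L = (\<Sum>i\<in>{1..N}. \<Sum>j\<in>{1..N}. c i * matpow N A n i j * b j)"
    unfolding L_def S_series_def by simp
  have inner: "fps_nth (weight A b c (path_arcs p) * (\<Prod>\<gamma>\<in>C. fps_kplus (class_weight A b c \<gamma>))) n =
      (\<Sum>g\<in>PiE C (\<lambda>_. K). tm p C g)" if C: "C \<in> accessible_sets N p" for p C
  proof -
    have fin: "finite C" using acc_finite_C[OF C] .
    have Csub: "C \<subseteq> elem_circuit_classes N" using C unfolding accessible_sets_def by auto
    have "fps_nth (weight A b c (path_arcs p) * (\<Prod>\<gamma>\<in>C. fps_kplus (class_weight A b c \<gamma>))) n =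
          fps_nth (weight A b c (path_arcs p) * (\<Prod>\<gamma>\<in>C. \<Sum>k\<in>K. class_weight A b c \<gamma> ^ k)) n"
    proof (rule mult_trunc)
      fix m assume m: "m \<le> n"
      show "fps_nth (\<Prod>\<gamma>\<in>C. fps_kplus (class_weight A b c \<gamma>)) m =
            fps_nth (\<Prod>\<gamma>\<in>C. \<Sum>k\<in>K. class_weight A b c \<gamma> ^ k) m"
      proof (rule prod_trunc[OF fin _ m])
        fix \<gamma> m' assume g: "\<gamma> \<in> C" and m': "m' \<le> n"
        have "fps_nth (class_weight A b c \<gamma>) 0 = 0" using class_weight0 g Csub by blast
        then show "fps_nth (fps_kplus (class_weight A b c \<gamma>)) m' = fps_nth (\<Sum>k\<in>K. class_weight A b c \<gamma> ^ k) m'"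
          unfolding K_def using kplus_trunc[of _ m' "Suc n"] m' by simp
      qed
    qed
    also have "(\<Prod>\<gamma>\<in>C. \<Sum>k\<in>K. class_weight A b c \<gamma> ^ k) = (\<Sum>g\<in>PiE C (\<lambda>_. K). \<Prod>\<gamma>\<in>C. class_weight A b c \<gamma> ^ g \<gamma>)"
      by (rule prod_sum_PiE[OF fin]) (simp add: K_def)
    also have "fps_nth (weight A b c (path_arcs p) * (\<Sum>g\<in>PiE C (\<lambda>_. K). \<Prod>\<gamma>\<in>C. class_weight A b c \<gamma> ^ g \<gamma>)) n
       = (\<Sum>g\<in>PiE C (\<lambda>_. K). tm p C g)"
      unfolding tm_def sum_distrib_left fps_sum_nth ..
    finally show ?thesis .
  qed
  have R_eq: "R = (\<Sum>p\<in>elem_paths N. \<Sum>C\<in>accessible_sets N p. \<Sum>g\<in>PiE C (\<lambda>_. K). tm p C g)"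
  proof -
    have "R = (\<Sum>p\<in>elem_paths N. \<Sum>C\<in>accessible_sets N p.
          fps_nth (weight A b c (path_arcs p) * (\<Prod>\<gamma>\<in>C. fps_kplus (class_weight A b c \<gamma>))) n)"
      unfolding R_def fps_sum_nth sum_distrib_left ..
    also have "\<dots> = (\<Sum>p\<in>elem_paths N. \<Sum>C\<in>accessible_sets N p. \<Sum>g\<in>PiE C (\<lambda>_. K). tm p C g)"
      using inner by (intro sum.cong refl) simp
    finally show ?thesis .
  qed
  have finP: "finite (elem_paths N)" by (rule finite_elem_paths)
  have finPi: "finite (PiE C (\<lambda>_. K))" if "C \<in> accessible_sets N p" for C p
    using acc_finite_C[OF that] by (intro finite_PiE) (auto simp: K_def)
  have d1: "ile L R"
    unfolding L_eq
  proof (intro ile_sum_bound)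
    fix i j assume i: "i \<in> {1..N}" and j: "j \<in> {1..N}"
    have "ile (matpow N A n i j * (c i * b j)) R"
    proof (rule matpow_upper[OF i j])
      fix ys assume ys: "set ys \<subseteq> {1..N}" "length ys = Suc n" "hd ys = j" "last ys = i"
      have ne: "ys \<noteq> []" using ys(2) by auto
      obtain p C g where pCg: "p \<in> elem_paths N" "C \<in> accessible_sets N p" "g \<in> PiE C (\<lambda>_. K)"
        "tm p C g = b (hd ys) * prodA A ys * c (last ys)"
        using dir1[OF ne ys(1,2), where A=A and b=b and c=c] unfolding K_def tm_def by blast
      have "ile (tm p C g) (\<Sum>g\<in>PiE C (\<lambda>_. K). tm p C g)"
        by (rule ile_sum_member[OF finPi[OF pCg(2)] pCg(3)])
      moreover have "ile (\<Sum>g\<in>PiE C (\<lambda>_. K). tm p C g) (\<Sum>C\<in>accessible_sets N p. \<Sum>g\<in>PiE C (\<lambda>_. K). tm p C g)"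
        by (rule ile_sum_member[OF finite_acc pCg(2)])
      moreover have "ile (\<Sum>C\<in>accessible_sets N p. \<Sum>g\<in>PiE C (\<lambda>_. K). tm p C g) R"
        unfolding R_eq by (rule ile_sum_member[OF finP pCg(1)])
      ultimately have "ile (tm p C g) R" using ile_trans by metis
      moreover have "tm p C g = prodA A ys * (c i * b j)" using pCg(4) ys by (simp add: mult_ac)
      ultimately show "ile (prodA A ys * (c i * b j)) R" by simp
    qed
    moreover have "c i * matpow N A n i j * b j = matpow N A n i j * (c i * b j)" by (simp add: mult_ac)
    ultimately show "ile (c i * matpow N A n i j * b j) R" by simp
  qed simp_all
  have d2: "ile R L"
    unfolding R_eq
  proof (intro ile_sum_bound)
    fix p C g assume p: "p \<in> elem_paths N" and C: "C \<in> accessible_sets N p" and g: "g \<in> PiE C (\<lambda>_. K)"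
    have g1: "\<forall>\<gamma>\<in>C. g \<gamma> \<ge> (1::nat)" using g unfolding K_def by auto
    obtain ys where ys: "ys \<noteq> []" "set ys \<subseteq> {1..N}"
      "weight A b c (path_arcs p) * (\<Prod>\<gamma>\<in>C. class_weight A b c \<gamma> ^ g \<gamma>) =
       fps_const (b (hd ys) * prodA A ys * c (last ys)) * fps_X ^ (length ys - 1)"
      using dir2[OF p C g1, where A=A and b=b and c=c] by blast
    have tm: "tm p C g = (if n = length ys - 1 then b (hd ys) * prodA A ys * c (last ys) else 0)"
      unfolding tm_def ys(3) by (rule fps_const_X_nth)
    show "ile (tm p C g) L"
    proof (cases "n = length ys - 1")
      case False then show ?thesis unfolding tm by (simp add: ile_zero)
    next
      case True
      define i where "i = last ys"
      define j where "j = hd ys"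
      have "last ys \<in> set ys" "hd ys \<in> set ys" using ys(1) by simp_all
      then have i: "i \<in> {1..N}" "j \<in> {1..N}" using ys(2) unfolding i_def j_def by blast+
      have "ile (prodA A ys) (matpow N A n i j)"
        using matpow_lower[OF ys(1,2), of A] True unfolding i_def j_def by simp
      then have "ile (c i * prodA A ys * b j) (c i * matpow N A n i j * b j)"
        by (intro ile_mult_right ile_mult_left)
      moreover have "ile (c i * matpow N A n i j * b j) (\<Sum>j\<in>{1..N}. c i * matpow N A n i j * b j)"
        by (rule ile_sum_member[OF _ i(2)]) simp
      moreover have "ile (\<Sum>j\<in>{1..N}. c i * matpow N A n i j * b j) L"
        unfolding L_eq by (rule ile_sum_member[OF _ i(1)]) simp
      ultimately have "ile (c i * prodA A ys * b j) L" using ile_trans by metis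
      moreover have "tm p C g = c i * prodA A ys * b j"
        unfolding tm using True by (simp add: i_def j_def mult_ac)
      ultimately show ?thesis by simp
    qed
  qed (use finP finite_acc finPi in auto)
  have "L = R" using ile_antisym[OF d1 d2] .
  then show "fps_nth (S_series N A b c) n = fps_nth (\<Sum>p\<in>elem_paths N. weight A b c (path_arcs p) *
       (\<Sum>C\<in>accessible_sets N p. \<Prod>\<gamma>\<in>C. fps_kplus (class_weight A b c \<gamma>))) n"
    unfolding L_def R_def .
qed

end
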